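(* On the exterior Kerr spacetime (Boyer–Lindquist coordinates, region $\Delta>0$, $0<\theta<\pi$), let $C\neq0$ be a constant, $f=f(r)$ a smooth function with $f(r)^2<C^2$, and $u_0\neq0$ a constant. Then $$F_M=\frac{u_0}{\Delta}\,dr\wedge\Big[\frac{\rho^2\sqrt{C^2-f^2}}{\sin\theta}\,d\theta+f\,\big(a\,dt-(r^2+a^2)\,d\varphi\big)\Big]$$ is a magnetically dominated force-free electromagnetic field. Its kernel is spanned by $e_0=\frac{1}{\sqrt{\rho^2\Delta}}[(r^2+a^2)\partial_t+a\partial_\varphi]$ and $e_1=\frac{a\sin^2\theta\,\partial_t+L\sin\theta\,\partial_\theta+\partial_\varphi}{\sqrt{\rho^2(1+L^2)}\sin\theta}$, where $L=f/\sqrt{C^2-f^2}$. If moreover $f$ is constant, then $F_M$ is a vacuum solution.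
   Context: The Kerr metric with mass $M$ and spin parameter $a$ in Boyer–Lindquist coordinates $(t,r,\theta,\varphi)$ is $ds^2=g_{tt}dt^2+2g_{t\varphi}dt\,d\varphi+\frac{\rho^2}{\Delta}dr^2+\rho^2d\theta^2+\frac{\Sigma^2\sin^2\theta}{\rho^2}d\varphi^2$, with $g_{tt}=-1+\frac{2Mr}{\rho^2}$, $g_{t\varphi}=-\frac{2Mra\sin^2\theta}{\rho^2}$, $\rho^2=r^2+a^2\cos^2\theta$, $\Delta=r^2-2Mr+a^2$, $\Sigma^2=(r^2+a^2)^2-\Delta a^2\sin^2\theta$. An electromagnetic field is a 2-form $F$ with $dF=0$; its current density vector is $j^\nu=-\nabla_\mu F^{\mu\nu}$ ($\nabla$ the Levi-Civita connection); force-free means $F(j,\chi)=0$ for all vector fields $\chi$; magnetically dominated means $F_{\mu\nu}F^{\mu\nu}>0$; vacuum means $j=0$. *)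

theory Defs
  imports "HOL-Analysis.Analysis"
begin

text \<open>Points of the Boyer--Lindquist chart are vectors x in real^4 with
  x$0 = t, x$1 = r, x$2 = theta, x$3 = phi.  Tensors are given by their
  coordinate components; index 0,1,2,3 of type 4 correspond to t,r,theta,phi.\<close>

type_synonym pt = "real ^ 4"

definition rho2 :: "real \<Rightarrow> real \<Rightarrow> real \<Rightarrow> real" where
  "rho2 a r th = r\<^sup>2 + a\<^sup>2 * (cos th)\<^sup>2"

definition Delta :: "real \<Rightarrow> real \<Rightarrow> real \<Rightarrow> real" where
  "Delta M a r = r\<^sup>2 - 2 * M * r + a\<^sup>2"

definition Sig2 :: "real \<Rightarrow> real \<Rightarrow> real \<Rightarrow> real \<Rightarrow> real" where
  "Sig2 M a r th = (r\<^sup>2 + a\<^sup>2)\<^sup>2 - Delta M a r * a\<^sup>2 * (sin th)\<^sup>2"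

definition kerr_g :: "real \<Rightarrow> real \<Rightarrow> pt \<Rightarrow> real^4^4" where
  "kerr_g M a x = (let r = x$1; th = x$2 in
     (\<chi> i j.
        if i = 0 \<and> j = 0 then -1 + 2 * M * r / rho2 a r th
        else if (i = 0 \<and> j = 3) \<or> (i = 3 \<and> j = 0) then - 2 * M * r * a * (sin th)\<^sup>2 / rho2 a r th
        else if i = 1 \<and> j = 1 then rho2 a r th / Delta M a r
        else if i = 2 \<and> j = 2 then rho2 a r th
        else if i = 3 \<and> j = 3 then Sig2 M a r th * (sin th)\<^sup>2 / rho2 a r th
        else 0))"

definition kerr_ginv :: "real \<Rightarrow> real \<Rightarrow> pt \<Rightarrow> real^4^4" where
  "kerr_ginv M a x = matrix_inv (kerr_g M a x)"

text \<open>Exterior region: outside the outer horizon r_+ = M + sqrt(M^2 - a^2),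
  where Delta > 0, and 0 < theta < pi.\<close>
definition exterior :: "real \<Rightarrow> real \<Rightarrow> pt set" where
  "exterior M a = {x. M + sqrt (M\<^sup>2 - a\<^sup>2) < x$1 \<and> 0 < x$2 \<and> x$2 < pi}"

definition pd :: "(pt \<Rightarrow> real) \<Rightarrow> 4 \<Rightarrow> pt \<Rightarrow> real" where
  "pd h i x = deriv (\<lambda>s. h (x + s *\<^sub>R axis i 1)) 0"

definition christoffel :: "real \<Rightarrow> real \<Rightarrow> pt \<Rightarrow> 4 \<Rightarrow> 4 \<Rightarrow> 4 \<Rightarrow> real" where
  "christoffel M a x l m n =
     (1/2) * (\<Sum>s\<in>UNIV. kerr_ginv M a x $ l $ s *
        (pd (\<lambda>y. kerr_g M a y $ s $ n) m x + pd (\<lambda>y. kerr_g M a y $ s $ m) n x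
         - pd (\<lambda>y. kerr_g M a y $ m $ n) s x))"

text \<open>A 2-form is given by its antisymmetric covariant components F_{mu nu}.\<close>
type_synonym field = "pt \<Rightarrow> real^4^4"

definition wedge1 :: "real^4 \<Rightarrow> real^4 \<Rightarrow> real^4^4" where
  "wedge1 \<alpha> \<beta> = (\<chi> m n. \<alpha>$m * \<beta>$n - \<alpha>$n * \<beta>$m)"

definition Fup :: "real \<Rightarrow> real \<Rightarrow> field \<Rightarrow> pt \<Rightarrow> real^4^4" where
  "Fup M a F x = (\<chi> m n. \<Sum>p\<in>UNIV. \<Sum>q\<in>UNIV.
        kerr_ginv M a x $ m $ p * kerr_ginv M a x $ n $ q * F x $ p $ q)"

definition closed_form :: "field \<Rightarrow> pt set \<Rightarrow> bool" where
  "closed_form F U \<longleftrightarrow> (\<forall>x\<in>U. \<forall>l m n.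
      pd (\<lambda>y. F y $ m $ n) l x + pd (\<lambda>y. F y $ n $ l) m x + pd (\<lambda>y. F y $ l $ m) n x = 0)"

text \<open>Current j^nu = - nabla_mu F^{mu nu}.\<close>
definition current :: "real \<Rightarrow> real \<Rightarrow> field \<Rightarrow> pt \<Rightarrow> real^4" where
  "current M a F x = (\<chi> n. - (\<Sum>m\<in>UNIV.
       pd (\<lambda>y. Fup M a F y $ m $ n) m x
       + (\<Sum>l\<in>UNIV. christoffel M a x m m l * Fup M a F x $ l $ n
                    + christoffel M a x n m l * Fup M a F x $ m $ l)))"

definition form_apply :: "real^4^4 \<Rightarrow> real^4 \<Rightarrow> real^4 \<Rightarrow> real" where
  "form_apply B v w = (\<Sum>m\<in>UNIV. \<Sum>n\<in>UNIV. B $ m $ n * v $ m * w $ n)"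

definition force_free :: "real \<Rightarrow> real \<Rightarrow> field \<Rightarrow> pt set \<Rightarrow> bool" where
  "force_free M a F U \<longleftrightarrow> (\<forall>x\<in>U. \<forall>w. form_apply (F x) (current M a F x) w = 0)"

definition magnetically_dominated :: "real \<Rightarrow> real \<Rightarrow> field \<Rightarrow> pt set \<Rightarrow> bool" where
  "magnetically_dominated M a F U \<longleftrightarrow>
     (\<forall>x\<in>U. (\<Sum>m\<in>UNIV. \<Sum>n\<in>UNIV. F x $ m $ n * Fup M a F x $ m $ n) > 0)"

definition vacuum :: "real \<Rightarrow> real \<Rightarrow> field \<Rightarrow> pt set \<Rightarrow> bool" where
  "vacuum M a F U \<longleftrightarrow> (\<forall>x\<in>U. current M a F x = 0)"

definition form_kernel :: "real^4^4 \<Rightarrow> (real^4) set" where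
  "form_kernel B = {v. \<forall>w. form_apply B v w = 0}"

definition smooth_real_on :: "real set \<Rightarrow> (real \<Rightarrow> real) \<Rightarrow> bool" where
  "smooth_real_on S f \<longleftrightarrow> (\<forall>k. \<forall>r\<in>S. ((deriv ^^ k) f) differentiable (at r))"

definition F_M :: "real \<Rightarrow> real \<Rightarrow> real \<Rightarrow> (real \<Rightarrow> real) \<Rightarrow> real \<Rightarrow> field" where
  "F_M M a C f u0 x = (let r = x$1; th = x$2 in
     (u0 / Delta M a r) *\<^sub>R wedge1 (axis 1 1)
        ((rho2 a r th * sqrt (C\<^sup>2 - (f r)\<^sup>2) / sin th) *\<^sub>R axis 2 1
         + (f r * a) *\<^sub>R axis 0 1 - (f r * (r\<^sup>2 + a\<^sup>2)) *\<^sub>R axis 3 1))"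

definition e0 :: "real \<Rightarrow> real \<Rightarrow> pt \<Rightarrow> real^4" where
  "e0 M a x = (let r = x$1; th = x$2 in
     (1 / sqrt (rho2 a r th * Delta M a r)) *\<^sub>R ((r\<^sup>2 + a\<^sup>2) *\<^sub>R axis 0 1 + a *\<^sub>R axis 3 1))"

definition e1 :: "real \<Rightarrow> real \<Rightarrow> (real \<Rightarrow> real) \<Rightarrow> pt \<Rightarrow> real^4" where
  "e1 a C f x = (let r = x$1; th = x$2; L = f r / sqrt (C\<^sup>2 - (f r)\<^sup>2) in
     (1 / (sqrt (rho2 a r th * (1 + L\<^sup>2)) * sin th)) *\<^sub>R
       ((a * (sin th)\<^sup>2) *\<^sub>R axis 0 1 + (L * sin th) *\<^sub>R axis 2 1 + axis 3 1))"

end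

theory Submission
  imports Defs
begin


lemma four0: "(4::4) = 0" by simp
lemma sum4: "sum f (UNIV::4 set) = f 0 + f 1 + f 2 + f 3"
  by (simp add: sum_4 ac_simps four0)
lemma all4: "(\<forall>i::4. P i) \<longleftrightarrow> P 0 \<and> P 1 \<and> P 2 \<and> P 3"
  by (metis exhaust_4 four0)
lemma cases4: obtains "(i::4) = 0" | "i = 1" | "i = 2" | "i = 3"
  by (metis exhaust_4 four0)

definition GI :: "real \<Rightarrow> real \<Rightarrow> real \<Rightarrow> real \<Rightarrow> real^4^4" where
 "GI M a r th = (\<chi> i j. if i=0 \<and> j=0 then - Sig2 M a r th / (rho2 a r th * Delta M a r)
   else if (i=0\<and>j=3)\<or>(i=3\<and>j=0) then - 2*M*r*a/(rho2 a r th * Delta M a r)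
   else if i=1\<and>j=1 then Delta M a r / rho2 a r th
   else if i=2\<and>j=2 then 1/rho2 a r th
   else if i=3\<and>j=3 then (Delta M a r - a^2*(sin th)^2)/(rho2 a r th * Delta M a r * (sin th)^2)
   else 0)"

lemma matrix_inv_eqI:
  fixes A B :: "real^4^4"
  assumes "A ** B = mat 1" "B ** A = mat 1"
  shows "matrix_inv A = B"
proof -
  have ex: "\<exists>A'. A ** A' = mat 1 \<and> A' ** A = mat 1" using assms by blast
  let ?A = "matrix_inv A"
  have "A ** ?A = mat 1 \<and> ?A ** A = mat 1"
    unfolding matrix_inv_def by (rule someI_ex[OF ex])
  then have "?A = ?A ** (A ** B)" "?A ** A = mat 1" using assms by (simp_all)
  then show ?thesis by (simp add: matrix_mul_assoc)
qed

lemma ginv_eq: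
  assumes D: "Delta M a (x$1) \<noteq> 0" and S: "sin (x$2) \<noteq> 0" and R: "rho2 a (x$1) (x$2) \<noteq> 0"
  shows "kerr_ginv M a x = GI M a (x$1) (x$2)"
proof -
  define r where "r = x$1"
  define t where "t = x$2"
  have D': "r^2 - 2*M*r + a^2 \<noteq> 0" using D by (simp add: r_def Delta_def)
  have R': "r^2 + a^2 * (cos t)^2 \<noteq> 0" using R by (simp add: r_def t_def rho2_def)
  have sc: "(sin t)^2 = 1 - (cos t)^2" by (simp add: sin_squared_eq)
  have S': "sin t \<noteq> 0" using S by (simp add: t_def)
  have D'': "Delta M a r \<noteq> 0" "rho2 a r t \<noteq> 0" using D R by (simp_all add: r_def t_def)
  have sc2: "(sin t)^2 + (cos t)^2 = 1" by simp
  have "kerr_g M a x ** GI M a r t = mat 1 \<and> GI M a r t ** kerr_g M a x = mat 1"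
    using D'' S'
    apply (simp add: vec_eq_iff all4 sum4 matrix_matrix_mult_def mat_def kerr_g_def GI_def Let_def
           r_def[symmetric] t_def[symmetric] Sig2_def)
    apply (intro conjI)
    apply (simp_all add: field_simps)
    apply (unfold rho2_def Delta_def)
    using sc2 apply algebra+
    done
  then show ?thesis unfolding kerr_ginv_def r_def t_def by (intro matrix_inv_eqI) auto
qed
definition bup :: "real \<Rightarrow> real \<Rightarrow> (real \<Rightarrow> real) \<Rightarrow> real \<Rightarrow> real \<Rightarrow> 4 \<Rightarrow> real" where
  "bup a C f r t k = (if k = 0 then - f r * a else if k = 2 then sqrt (C^2 - (f r)^2) / sin t
     else if k = 3 then - f r / (sin t)^2 else 0)"

definition FU :: "real \<Rightarrow> real \<Rightarrow> (real \<Rightarrow> real) \<Rightarrow> real \<Rightarrow> real \<Rightarrow> real \<Rightarrow> real^4^4" where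
  "FU a C f u0 r t = (\<chi> m n. (if m = 1 then u0 / rho2 a r t * bup a C f r t n else 0)
      - (if n = 1 then u0 / rho2 a r t * bup a C f r t m else 0))"

lemma Fup_eq:
  assumes D: "Delta M a (x$1) \<noteq> 0" and S: "sin (x$2) \<noteq> 0" and R: "rho2 a (x$1) (x$2) \<noteq> 0"
  shows "Fup M a (F_M M a C f u0) x = FU a C f u0 (x$1) (x$2)"
proof -
  define r where "r = x$1"
  define t where "t = x$2"
  have D'': "Delta M a r \<noteq> 0" "rho2 a r t \<noteq> 0" using D R by (simp_all add: r_def t_def)
  have S': "sin t \<noteq> 0" using S by (simp add: t_def)
  have sc2: "(sin t)^2 + (cos t)^2 = 1" by simp
  show ?thesis
    using D'' S'
    apply (simp add: ginv_eq[OF D S R] Fup_def vec_eq_iff all4 sum4 F_M_def wedge1_def axis_def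
        GI_def FU_def bup_def Let_def r_def[symmetric] t_def[symmetric] Sig2_def)
    apply (intro conjI)
    apply (simp_all add: field_simps)
    apply (unfold rho2_def Delta_def)
    using sc2 apply algebra+
    done
qed


definition g00r where "g00r M a r t = 2*M/rho2 a r t - 4*M*r^2/(rho2 a r t)^2"
definition g03r where "g03r M a r t = -2*M*a*(sin t)^2/rho2 a r t + 4*M*r^2*a*(sin t)^2/(rho2 a r t)^2"
definition g11r where "g11r M a r t = 2*r/Delta M a r - rho2 a r t*(2*r-2*M)/(Delta M a r)^2"
definition g33r where "g33r M a r t = ((4*r*(r^2+a^2) - (2*r-2*M)*a^2*(sin t)^2)*(sin t)^2)/rho2 a r t
   - Sig2 M a r t*(sin t)^2*2*r/(rho2 a r t)^2"
definition rhot :: "real \<Rightarrow> real \<Rightarrow> real" where "rhot a t = - 2 * a^2 * cos t * sin t"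
definition g00t where "g00t M a r t = -2*M*r*rhot a t/(rho2 a r t)^2"
definition g03t where "g03t M a r t = -2*M*r*a*(2* sin t* cos t)/rho2 a r t + 2*M*r*a*(sin t)^2*rhot a t/(rho2 a r t)^2"
definition g11t where "g11t M a r t = rhot a t/Delta M a r"
definition g33t where "g33t M a r t = (-(Delta M a r)*a^2*2* sin t* cos t*(sin t)^2 + Sig2 M a r t*2* sin t* cos t)/rho2 a r t
   - Sig2 M a r t*(sin t)^2*rhot a t/(rho2 a r t)^2"

lemma d22r: "((\<lambda>r. rho2 a r t) has_real_derivative 2*r) (at r)"
  unfolding rho2_def
  by (auto intro!: derivative_eq_intros)
lemma d22t: "((\<lambda>t. rho2 a r t) has_real_derivative rhot a t) (at t)"
  unfolding rho2_def rhot_def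
  by (auto intro!: derivative_eq_intros simp: field_simps)
lemma dDr: "((\<lambda>r. Delta M a r) has_real_derivative 2*r - 2*M) (at r)"
  unfolding Delta_def
  by (auto intro!: derivative_eq_intros)
lemma dSr: "((\<lambda>r. Sig2 M a r t) has_real_derivative 4*r*(r^2+a^2) - (2*r-2*M)*a^2*(sin t)^2) (at r)"
  unfolding Sig2_def
  by (auto intro!: derivative_eq_intros dDr simp: field_simps)
lemma dSt: "((\<lambda>t. Sig2 M a r t) has_real_derivative -(Delta M a r)*a^2*2* sin t* cos t) (at t)"
  unfolding Sig2_def
  by (auto intro!: derivative_eq_intros simp: field_simps)

context fixes M a r t :: real
  assumes R: "rho2 a r t \<noteq> 0" and D: "Delta M a r \<noteq> 0"
begin
lemma R': "r^2 + a^2*(cos t)^2 \<noteq> 0" using R by (simp add: rho2_def)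
lemma D': "r^2 - 2*M*r + a^2 \<noteq> 0" using D by (simp add: Delta_def)

lemma d00r: "((\<lambda>r. 2 * M * r / rho2 a r t - 1) has_real_derivative g00r M a r t) (at r)"
  using R D unfolding g00r_def
  by (auto intro!: derivative_eq_intros d22r d22t dDr dSr dSt simp: field_simps power2_eq_square)
lemma d03r: "((\<lambda>r. - (2 * M * r * a * (sin t)\<^sup>2 / rho2 a r t)) has_real_derivative g03r M a r t) (at r)"
  using R D unfolding g03r_def
  by (auto intro!: derivative_eq_intros d22r d22t dDr dSr dSt simp: field_simps power2_eq_square)
lemma d11r: "((\<lambda>r. rho2 a r t / Delta M a r) has_real_derivative g11r M a r t) (at r)"
  using R D unfolding g11r_def
  by (auto intro!: derivative_eq_intros d22r d22t dDr dSr dSt simp: field_simps power2_eq_square)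
lemma d33r: "((\<lambda>r. Sig2 M a r t * (sin t)\<^sup>2 / rho2 a r t) has_real_derivative g33r M a r t) (at r)"
  using R D unfolding g33r_def
  by (auto intro!: derivative_eq_intros d22r d22t dDr dSr dSt simp: field_simps power2_eq_square)
lemma d00t: "((\<lambda>t. 2 * M * r / rho2 a r t - 1) has_real_derivative g00t M a r t) (at t)"
  using R D unfolding g00t_def
  by (auto intro!: derivative_eq_intros d22r d22t dDr dSr dSt simp: field_simps power2_eq_square)
lemma d03t: "((\<lambda>t. - (2 * M * r * a * (sin t)\<^sup>2 / rho2 a r t)) has_real_derivative g03t M a r t) (at t)"
  using R D unfolding g03t_def
  by (auto intro!: derivative_eq_intros d22r d22t dDr dSr dSt simp: field_simps power2_eq_square)
lemma d11t: "((\<lambda>t. rho2 a r t / Delta M a r) has_real_derivative g11t M a r t) (at t)"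
  using R D unfolding g11t_def
  by (auto intro!: derivative_eq_intros d22r d22t dDr dSr dSt simp: field_simps power2_eq_square)
lemma d33t: "((\<lambda>t. Sig2 M a r t * (sin t)\<^sup>2 / rho2 a r t) has_real_derivative g33t M a r t) (at t)"
  using R D unfolding g33t_def
  by (auto intro!: derivative_eq_intros d22r d22t dDr dSr dSt simp: field_simps power2_eq_square)
end


definition cv :: "real \<Rightarrow> real \<Rightarrow> real^4" where
  "cv r t = (\<chi> i. if i = 1 then r else if i = 2 then t else 0)"
lemma cv1[simp]: "cv r t $ 1 = r" and cv2[simp]: "cv r t $ 2 = t"
  by (simp_all add: cv_def)

lemma deriv_shift0: fixes h :: "real \<Rightarrow> real" shows "deriv (\<lambda>s. h (c + s)) 0 = deriv h c"
proof -
  have "\<And>D. ((\<lambda>s. h (c + s)) has_real_derivative D) (at 0) \<longleftrightarrow> (h has_real_derivative D) (at c)"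
    using DERIV_shift[of h _ 0 c] by (simp add: add.commute)
  then show ?thesis unfolding deriv_def by simp
qed

lemma deriv_const0: "deriv (\<lambda>s. (c::real)) x = 0"
  by (rule DERIV_imp_deriv) (rule DERIV_const)

lemma pd_coord:
  fixes H :: "real \<Rightarrow> real \<Rightarrow> real"
  shows "pd (\<lambda>y. H (y$1) (y$2)) i x =
    (if i = 1 then deriv (\<lambda>r. H r (x$2)) (x$1) else if i = 2 then deriv (\<lambda>t. H (x$1) t) (x$2) else 0)"
proof (cases i rule: cases4)
  case 1 then show ?thesis by (simp add: pd_def axis_def deriv_const0)
next
  case 2 then show ?thesis using deriv_shift0[of "\<lambda>r. H r (x$2)" "x$1"] by (simp add: pd_def axis_def)
next
  case 3 then show ?thesis using deriv_shift0[of "\<lambda>t. H (x$1) t" "x$2"] by (simp add: pd_def axis_def)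
next
  case 4 then show ?thesis by (simp add: pd_def axis_def deriv_const0)
qed

lemma pd_local:
  assumes U: "open U" "x \<in> U" and eq: "\<forall>y\<in>U. h y = g y"
  shows "pd h i x = pd g i x"
proof -
  obtain e where e: "e > 0" "ball x e \<subseteq> U" using U open_contains_ball by blast
  have ev: "eventually (\<lambda>s. h (x + s *\<^sub>R axis i 1) = g (x + s *\<^sub>R axis i 1)) (nhds (0::real))"
    unfolding eventually_nhds_metric
  proof (intro exI[of _ e] conjI allI impI)
    fix s :: real assume "dist s 0 < e"
    then have "x + s *\<^sub>R axis i 1 \<in> ball x e"
      by (simp add: dist_norm)
    then show "h (x + s *\<^sub>R axis i 1) = g (x + s *\<^sub>R axis i 1)" using e eq by blast
  qed (rule e(1))
  have "\<And>D. ((\<lambda>s. h (x + s *\<^sub>R axis i 1)) has_real_derivative D) (at 0) \<longleftrightarrow>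
           ((\<lambda>s. g (x + s *\<^sub>R axis i 1)) has_real_derivative D) (at 0)"
    by (rule DERIV_cong_ev[OF refl ev refl])
  then show ?thesis unfolding pd_def deriv_def by simp
qed

lemma open_exterior: "open (exterior M a)"
  unfolding exterior_def
  by (intro open_Collect_conj open_Collect_less continuous_intros)

lemma exterior_facts:
  assumes "M > 0" "\<bar>a\<bar> \<le> M" "x \<in> exterior M a"
  shows "x$1 > 0" "Delta M a (x$1) > 0" "sin (x$2) > 0" "rho2 a (x$1) (x$2) > 0"
proof -
  let ?r = "x$1"
  have h: "M + sqrt (M^2 - a^2) < ?r" "0 < x$2" "x$2 < pi" using assms(3) by (auto simp: exterior_def)
  have "a^2 \<le> M^2" using assms(2) by (metis abs_ge_zero power2_abs power_mono)
  then have nn: "M^2 - a^2 \<ge> 0" by simp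
  have sq: "sqrt (M^2 - a^2) \<ge> 0" using nn by simp
  show r0: "?r > 0" using h(1) sq assms(1) by linarith
  have "(sqrt (M^2 - a^2))^2 = M^2 - a^2" using nn real_sqrt_pow2 by blast
  moreover have "(?r - M)^2 > (sqrt (M^2 - a^2))^2"
    using h(1) sq by (intro power_strict_mono) auto
  ultimately show "Delta M a ?r > 0" unfolding Delta_def by (simp add: power2_eq_square algebra_simps)
  show "sin (x$2) > 0" using h by (simp add: sin_gt_zero)
  have "a^2 * (cos (x$2))^2 \<ge> 0" by simp
  then show "rho2 a ?r (x$2) > 0" using r0 unfolding rho2_def by (simp add: add_pos_nonneg)
qed


definition grr :: "real \<Rightarrow> real \<Rightarrow> real \<Rightarrow> real \<Rightarrow> 4 \<Rightarrow> 4 \<Rightarrow> real" where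
  "grr M a r t s n = (if s=0 \<and> n=0 then g00r M a r t else if (s=0 \<and> n=3) \<or> (s=3 \<and> n=0) then g03r M a r t
     else if s=1 \<and> n=1 then g11r M a r t else if s=2 \<and> n=2 then 2*r else if s=3 \<and> n=3 then g33r M a r t else 0)"
definition grt :: "real \<Rightarrow> real \<Rightarrow> real \<Rightarrow> real \<Rightarrow> 4 \<Rightarrow> 4 \<Rightarrow> real" where
  "grt M a r t s n = (if s=0 \<and> n=0 then g00t M a r t else if (s=0 \<and> n=3) \<or> (s=3 \<and> n=0) then g03t M a r t
     else if s=1 \<and> n=1 then g11t M a r t else if s=2 \<and> n=2 then rhot a t else if s=3 \<and> n=3 then g33t M a r t else 0)"
definition dG :: "real \<Rightarrow> real \<Rightarrow> real \<Rightarrow> real \<Rightarrow> 4 \<Rightarrow> 4 \<Rightarrow> 4 \<Rightarrow> real" where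
  "dG M a r t m s n = (if m = 1 then grr M a r t s n else if m = 2 then grt M a r t s n else 0)"

lemma kg_cv: "kerr_g M a y = kerr_g M a (cv (y$1) (y$2))" by (simp add: kerr_g_def Let_def)

lemma deriv_grr:
  assumes R: "rho2 a r t \<noteq> 0" and D: "Delta M a r \<noteq> 0"
  shows "deriv (\<lambda>r. kerr_g M a (cv r t) $ s $ n) r = grr M a r t s n"
  by (cases s rule: cases4; cases n rule: cases4)
    (simp_all add: kerr_g_def Let_def grr_def deriv_const0
      DERIV_imp_deriv[OF d00r[OF R D]] DERIV_imp_deriv[OF d03r[OF R D]] DERIV_imp_deriv[OF d11r[OF R D]]
      DERIV_imp_deriv[OF d22r] DERIV_imp_deriv[OF d33r[OF R D]])

lemma deriv_grt:
  assumes R: "rho2 a r t \<noteq> 0" and D: "Delta M a r \<noteq> 0"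
  shows "deriv (\<lambda>t. kerr_g M a (cv r t) $ s $ n) t = grt M a r t s n"
  by (cases s rule: cases4; cases n rule: cases4)
    (simp_all add: kerr_g_def Let_def grt_def deriv_const0
      DERIV_imp_deriv[OF d00t[OF R D]] DERIV_imp_deriv[OF d03t[OF R D]] DERIV_imp_deriv[OF d11t[OF R D]]
      DERIV_imp_deriv[OF d22t] DERIV_imp_deriv[OF d33t[OF R D]])
lemma pd_g:
  assumes R: "rho2 a (x$1) (x$2) \<noteq> 0" and D: "Delta M a (x$1) \<noteq> 0"
  shows "pd (\<lambda>y. kerr_g M a y $ s $ n) m x = dG M a (x$1) (x$2) m s n"
proof -
  have e: "(\<lambda>y. kerr_g M a y $ s $ n) = (\<lambda>y. kerr_g M a (cv (y$1) (y$2)) $ s $ n)"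
    by (simp add: kerr_g_def Let_def)
  have p: "pd (\<lambda>y. kerr_g M a (cv (y$1) (y$2)) $ s $ n) m x =
    (if m = 1 then deriv (\<lambda>r. kerr_g M a (cv r (x$2)) $ s $ n) (x$1)
     else if m = 2 then deriv (\<lambda>t. kerr_g M a (cv (x$1) t) $ s $ n) (x$2) else 0)"
    using pd_coord[of "\<lambda>r t. kerr_g M a (cv r t) $ s $ n" m x] by simp
  show ?thesis unfolding e p dG_def
    using deriv_grr[OF R D] deriv_grt[OF R D] by simp
qed

definition Tl :: "real \<Rightarrow> real \<Rightarrow> real \<Rightarrow> real \<Rightarrow> 4 \<Rightarrow> real" where
  "Tl M a r t l = (if l = 1 then 2 * r / rho2 a r t
     else if l = 2 then (rhot a t * sin t + rho2 a r t * cos t) / (rho2 a r t * sin t) else 0)"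

lemma trace_sym:
  fixes A :: "4 \<Rightarrow> 4 \<Rightarrow> real" and B :: "4 \<Rightarrow> 4 \<Rightarrow> 4 \<Rightarrow> real"
  assumes "\<And>m s. A m s = A s m"
  shows "(\<Sum>m\<in>UNIV. 1/2 * (\<Sum>s\<in>UNIV. A m s * (B m s l + B l s m - B s m l)))
       = 1/2 * (\<Sum>m\<in>UNIV. \<Sum>s\<in>UNIV. A m s * B l s m)"
proof -
  have sw: "(\<Sum>m\<in>UNIV. \<Sum>s\<in>UNIV. A m s * B s m l) = (\<Sum>m\<in>UNIV. \<Sum>s\<in>UNIV. A m s * B m s l)"
    by (subst sum.swap) (simp add: assms)
  have "(\<Sum>m\<in>UNIV. 1/2 * (\<Sum>s\<in>UNIV. A m s * (B m s l + B l s m - B s m l)))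
     = 1/2 * ((\<Sum>m\<in>UNIV. \<Sum>s\<in>UNIV. A m s * B m s l) + (\<Sum>m\<in>UNIV. \<Sum>s\<in>UNIV. A m s * B l s m)
              - (\<Sum>m\<in>UNIV. \<Sum>s\<in>UNIV. A m s * B s m l))"
    by (simp add: sum_distrib_left algebra_simps sum.distrib sum_subtractf)
  then show ?thesis using sw by simp
qed

lemma block_r:
  assumes R: "rho2 a r t \<noteq> 0" and D: "Delta M a r \<noteq> 0" and S: "sin t \<noteq> 0"
  shows "GI M a r t $ 0 $ 0 * g00r M a r t + 2 * (GI M a r t $ 0 $ 3 * g03r M a r t) + GI M a r t $ 3 $ 3 * g33r M a r t
     = (2*r - 2*M) / Delta M a r"
proof -
  have sc2: "(sin t)^2 + (cos t)^2 = 1" by simp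
  show ?thesis using R D S
    apply (simp add: GI_def g00r_def g03r_def g33r_def Sig2_def)
    apply (simp add: field_simps)
    apply (unfold rho2_def Delta_def)
    using sc2 apply algebra
    done
qed

lemma block_t:
  assumes R: "rho2 a r t \<noteq> 0" and D: "Delta M a r \<noteq> 0" and S: "sin t \<noteq> 0"
  shows "GI M a r t $ 0 $ 0 * g00t M a r t + 2 * (GI M a r t $ 0 $ 3 * g03t M a r t) + GI M a r t $ 3 $ 3 * g33t M a r t
     = 2 * cos t / sin t"
proof -
  have sc2: "(sin t)^2 + (cos t)^2 = 1" by simp
  show ?thesis using R D S
    apply (simp add: GI_def g00t_def g03t_def g33t_def Sig2_def rhot_def)
    apply (simp add: field_simps)
    apply (unfold rho2_def Delta_def)
    using sc2 apply algebra
    done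
qed


lemma GI_ent: "GI M a r t $ 0 $ 1 = 0"
  "GI M a r t $ 0 $ 2 = 0"
  "GI M a r t $ 1 $ 0 = 0"
  "GI M a r t $ 1 $ 1 = Delta M a r / rho2 a r t"
  "GI M a r t $ 1 $ 2 = 0"
  "GI M a r t $ 1 $ 3 = 0"
  "GI M a r t $ 2 $ 0 = 0"
  "GI M a r t $ 2 $ 1 = 0"
  "GI M a r t $ 2 $ 2 = 1 / rho2 a r t"
  "GI M a r t $ 2 $ 3 = 0"
  "GI M a r t $ 3 $ 0 = GI M a r t $ 0 $ 3"
  "GI M a r t $ 3 $ 1 = 0"
  "GI M a r t $ 3 $ 2 = 0"
  by (simp_all add: GI_def)

lemma GI_sym: "GI M a r t $ m $ s = GI M a r t $ s $ m"
  by (cases m rule: cases4; cases s rule: cases4) (simp_all add: GI_def)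

lemma trace_christoffel:
  assumes R: "rho2 a (x$1) (x$2) \<noteq> 0" and D: "Delta M a (x$1) \<noteq> 0" and S: "sin (x$2) \<noteq> 0"
  shows "(\<Sum>m\<in>UNIV. christoffel M a x m m l) = Tl M a (x$1) (x$2) l"
proof -
  define r where "r = x$1"
  define t where "t = x$2"
  have D'': "Delta M a r \<noteq> 0" "rho2 a r t \<noteq> 0" using D R by (simp_all add: r_def t_def)
  have S': "sin t \<noteq> 0" using S by (simp add: t_def)
  have "(\<Sum>m\<in>UNIV. christoffel M a x m m l) = 1/2 * (\<Sum>m\<in>UNIV. \<Sum>s\<in>UNIV. GI M a r t $ m $ s * dG M a r t l s m)"
  proof -
    have "\<And>m. christoffel M a x m m l = 1/2 * (\<Sum>s\<in>UNIV. GI M a r t $ m $ s * (dG M a r t m s l + dG M a r t l s m - dG M a r t s m l))"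
      unfolding christoffel_def ginv_eq[OF D S R] pd_g[OF R D] r_def t_def by simp
    then have "(\<Sum>m\<in>UNIV. christoffel M a x m m l) = (\<Sum>m\<in>UNIV. 1/2 * (\<Sum>s\<in>UNIV. GI M a r t $ m $ s * (dG M a r t m s l + dG M a r t l s m - dG M a r t s m l)))"
      by (intro sum.cong) auto
    also have "\<dots> = 1/2 * (\<Sum>m\<in>UNIV. \<Sum>s\<in>UNIV. GI M a r t $ m $ s * dG M a r t l s m)"
      by (rule trace_sym[of "\<lambda>m s. GI M a r t $ m $ s" "dG M a r t" l, OF GI_sym])
    finally show ?thesis .
  qed
  also have "\<dots> = Tl M a r t l"
  proof (cases l rule: cases4)
    case 1 then show ?thesis by (simp add: dG_def Tl_def)
  next
    case 2
    have "(\<Sum>m\<in>UNIV. \<Sum>s\<in>UNIV. GI M a r t $ m $ s * dG M a r t l s m) =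
      (GI M a r t $ 0 $ 0 * g00r M a r t + 2 * (GI M a r t $ 0 $ 3 * g03r M a r t) + GI M a r t $ 3 $ 3 * g33r M a r t)
      + Delta M a r / rho2 a r t * g11r M a r t + 1 / rho2 a r t * (2 * r)"
      using 2 by (simp add: sum4 dG_def grr_def GI_ent)
    also have "\<dots> = (2*r - 2*M) / Delta M a r + Delta M a r / rho2 a r t * g11r M a r t + 1 / rho2 a r t * (2 * r)"
      by (simp add: block_r[OF D''(2) D''(1) S'])
    finally show ?thesis using 2 D'' by (simp add: Tl_def g11r_def field_simps power2_eq_square)
  next
    case 3
    have "(\<Sum>m\<in>UNIV. \<Sum>s\<in>UNIV. GI M a r t $ m $ s * dG M a r t l s m) =
      (GI M a r t $ 0 $ 0 * g00t M a r t + 2 * (GI M a r t $ 0 $ 3 * g03t M a r t) + GI M a r t $ 3 $ 3 * g33t M a r t)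
      + Delta M a r / rho2 a r t * g11t M a r t + 1 / rho2 a r t * rhot a t"
      using 3 by (simp add: sum4 dG_def grt_def GI_ent)
    also have "\<dots> = 2 * cos t / sin t + Delta M a r / rho2 a r t * g11t M a r t + 1 / rho2 a r t * rhot a t"
      by (simp add: block_t[OF D''(2) D''(1) S'])
    finally show ?thesis using 3 D'' S' by (simp add: Tl_def g11t_def field_simps power2_eq_square)
  next
    case 4 then show ?thesis by (simp add: dG_def Tl_def)
  qed
  finally show ?thesis by (simp add: r_def t_def)
qed


lemma kerr_g_sym: "kerr_g M a y $ i $ j = kerr_g M a y $ j $ i"
  by (cases i rule: cases4; cases j rule: cases4) (simp_all add: kerr_g_def Let_def)

lemma christoffel_sym: "christoffel M a x n m l = christoffel M a x n l m"
proof -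
  have "(\<lambda>y. kerr_g M a y $ m $ l) = (\<lambda>y. kerr_g M a y $ l $ m)"
    by (rule ext, rule kerr_g_sym)
  then show ?thesis unfolding christoffel_def by (simp add: algebra_simps)
qed

lemma sym_anti_sum:
  fixes c A :: "4 \<Rightarrow> 4 \<Rightarrow> real"
  assumes "\<And>m l. c m l = c l m" "\<And>m l. A m l = - A l m"
  shows "(\<Sum>m\<in>UNIV. \<Sum>l\<in>UNIV. c m l * A m l) = 0"
proof -
  let ?S = "(\<Sum>m\<in>UNIV. \<Sum>l\<in>UNIV. c m l * A m l)"
  have "?S = (\<Sum>l\<in>UNIV. \<Sum>m\<in>UNIV. c m l * A m l)" by (rule sum.swap)
  also have "\<dots> = (\<Sum>l\<in>UNIV. \<Sum>m\<in>UNIV. - (c l m * A l m))"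
  proof (intro sum.cong refl)
    fix l m show "c m l * A m l = - (c l m * A l m)" using assms(1)[of m l] assms(2)[of m l] by simp
  qed
  also have "\<dots> = - ?S" by (simp add: sum_negf)
  finally show ?thesis by simp
qed

lemma FU_anti: "FU a C f u0 r t $ m $ n = - FU a C f u0 r t $ n $ m"
  by (simp add: FU_def)

definition bd :: "real \<Rightarrow> real \<Rightarrow> (real \<Rightarrow> real) \<Rightarrow> real \<Rightarrow> real \<Rightarrow> real \<Rightarrow> 4 \<Rightarrow> real" where
  "bd a C f f' r t n = (if n = 0 then - f' * a else if n = 2 then - (f r * f') / (sqrt (C^2 - (f r)^2) * sin t)
     else if n = 3 then - f' / (sin t)^2 else 0)"

lemma dU_gen:
  assumes R: "rho2 a r t \<noteq> 0" and b: "(b has_real_derivative b') (at r)"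
  shows "((\<lambda>r. u0 / rho2 a r t * b r) has_real_derivative
     u0 * b' / rho2 a r t - u0 * b r * (2*r) / (rho2 a r t)^2) (at r)"
proof -
  have d: "((\<lambda>r. u0 / rho2 a r t) has_real_derivative (0 * rho2 a r t - u0 * (2*r)) / (rho2 a r t * rho2 a r t)) (at r)"
    using R by (intro DERIV_divide[OF DERIV_const d22r]) simp
  have "((\<lambda>r. u0 / rho2 a r t * b r) has_real_derivative
     (0 * rho2 a r t - u0 * (2*r)) / (rho2 a r t * rho2 a r t) * b r + b' * (u0 / rho2 a r t)) (at r)"
    by (rule DERIV_mult[OF d b])
  then show ?thesis by (simp add: power2_eq_square algebra_simps)
qed

lemma db_r:
  assumes S: "sin t \<noteq> 0" and Q: "C^2 - (f r)^2 > 0"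
    and fd: "(f has_real_derivative f') (at r)"
  shows "((\<lambda>r. bup a C f r t n) has_real_derivative bd a C f f' r t n) (at r)"
proof -
  have q: "sqrt (C^2 - (f r)^2) \<noteq> 0" using Q by simp
  have p: "((\<lambda>r. (f r)^2) has_real_derivative of_nat 2 * (f' * f r ^ (2 - Suc 0))) (at r)"
    by (rule DERIV_power[OF fd])
  have p2: "((\<lambda>r. C^2 - (f r)^2) has_real_derivative 0 - of_nat 2 * (f' * f r ^ (2 - Suc 0))) (at r)"
    by (rule DERIV_diff[OF DERIV_const p])
  have sq: "((\<lambda>r. sqrt (C^2 - (f r)^2)) has_real_derivative
      inverse (sqrt (C^2 - (f r)^2)) / 2 * (0 - of_nat 2 * (f' * f r ^ (2 - Suc 0)))) (at r)"
    by (rule DERIV_chain2[OF DERIV_real_sqrt[OF Q] p2])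
  show ?thesis
  proof (cases n rule: cases4)
    case 1
    have "((\<lambda>r. - (f r * a)) has_real_derivative - (f' * a)) (at r)"
      by (intro DERIV_minus DERIV_cmult_right fd)
    then show ?thesis using 1 by (simp add: bup_def bd_def)
  next
    case 2 then show ?thesis by (simp add: bup_def bd_def)
  next
    case 3
    have "((\<lambda>r. sqrt (C^2 - (f r)^2) / sin t) has_real_derivative
      inverse (sqrt (C^2 - (f r)^2)) / 2 * (0 - of_nat 2 * (f' * f r ^ (2 - Suc 0))) / sin t) (at r)"
      by (rule DERIV_cdivide[OF sq])
    then show ?thesis using 3 q S by (simp add: bup_def bd_def field_simps)
  next
    case 4
    have "((\<lambda>r. - f r / (sin t)^2) has_real_derivative - f' / (sin t)^2) (at r)"
      by (intro DERIV_cdivide DERIV_minus fd)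
    then show ?thesis using 4 by (simp add: bup_def bd_def)
  qed
qed

lemma dU_r:
  assumes R: "rho2 a r t \<noteq> 0" and S: "sin t \<noteq> 0" and Q: "C^2 - (f r)^2 > 0"
    and fd: "(f has_real_derivative f') (at r)"
  shows "((\<lambda>r. u0 / rho2 a r t * bup a C f r t n) has_real_derivative
     u0 * bd a C f f' r t n / rho2 a r t - u0 * bup a C f r t n * (2*r) / (rho2 a r t)^2) (at r)"
  by (rule dU_gen[OF R db_r[OF S Q fd]])

lemma dU2_t:
  assumes R: "rho2 a r t \<noteq> 0" and S: "sin t \<noteq> 0"
  shows "((\<lambda>t. - (u0 / rho2 a r t * bup a C f r t 2)) has_real_derivative
     u0 * sqrt (C^2 - (f r)^2) * (rhot a t * sin t + rho2 a r t * cos t) / (rho2 a r t * sin t)^2) (at t)"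
proof -
  let ?q = "sqrt (C^2 - (f r)^2)"
  have e: "(\<lambda>t. - (u0 / rho2 a r t * bup a C f r t 2)) = (\<lambda>t. - (u0 * ?q) / (rho2 a r t * sin t))"
    by (simp add: bup_def fun_eq_iff)
  have m: "((\<lambda>t. rho2 a r t * sin t) has_real_derivative rhot a t * sin t + cos t * rho2 a r t) (at t)"
    by (rule DERIV_mult[OF d22t DERIV_sin])
  have "((\<lambda>t. - (u0 * ?q) / (rho2 a r t * sin t)) has_real_derivative
     (0 * (rho2 a r t * sin t) - (- (u0 * ?q)) * (rhot a t * sin t + cos t * rho2 a r t)) / ((rho2 a r t * sin t) * (rho2 a r t * sin t))) (at t)"
    using R S by (intro DERIV_divide[OF DERIV_const m]) simp
  then have "((\<lambda>t. - (u0 * ?q) / (rho2 a r t * sin t)) has_real_derivative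
     u0 * sqrt (C^2 - (f r)^2) * (rhot a t * sin t + rho2 a r t * cos t) / (rho2 a r t * sin t)^2) (at t)"
    by (simp add: power2_eq_square algebra_simps)
  then show ?thesis unfolding e by simp
qed


lemma Fup_ext:
  assumes "M > 0" "\<bar>a\<bar> \<le> M" "y \<in> exterior M a"
  shows "Fup M a (F_M M a C f u0) y = FU a C f u0 (y$1) (y$2)"
  using exterior_facts[OF assms] by (intro Fup_eq) auto

lemma pdFup:
  assumes "M > 0" "\<bar>a\<bar> \<le> M" "x \<in> exterior M a"
  shows "pd (\<lambda>y. Fup M a (F_M M a C f u0) y $ m $ n) i x =
    (if i = 1 then deriv (\<lambda>r. FU a C f u0 r (x$2) $ m $ n) (x$1)
     else if i = 2 then deriv (\<lambda>t. FU a C f u0 (x$1) t $ m $ n) (x$2) else 0)"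
proof -
  have "pd (\<lambda>y. Fup M a (F_M M a C f u0) y $ m $ n) i x = pd (\<lambda>y. FU a C f u0 (y$1) (y$2) $ m $ n) i x"
    using Fup_ext[OF assms(1,2)] by (intro pd_local[OF open_exterior assms(3)]) auto
  also have "\<dots> = (if i = 1 then deriv (\<lambda>r. FU a C f u0 r (x$2) $ m $ n) (x$1)
     else if i = 2 then deriv (\<lambda>t. FU a C f u0 (x$1) t $ m $ n) (x$2) else 0)"
    using pd_coord[of "\<lambda>r t. FU a C f u0 r t $ m $ n" i x] by simp
  finally show ?thesis .
qed

lemma current_eq:
  assumes M: "M > 0" "\<bar>a\<bar> \<le> M" and x: "x \<in> exterior M a"
  shows "current M a (F_M M a C f u0) x $ n =
    - ((\<Sum>m\<in>UNIV. pd (\<lambda>y. Fup M a (F_M M a C f u0) y $ m $ n) m x)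
       + (\<Sum>l\<in>UNIV. Tl M a (x$1) (x$2) l * FU a C f u0 (x$1) (x$2) $ l $ n))"
proof -
  note ef = exterior_facts[OF M x]
  let ?F = "F_M M a C f u0"
  let ?U = "FU a C f u0 (x$1) (x$2)"
  let ?G = "christoffel M a x"
  have FX: "Fup M a ?F x = ?U" by (rule Fup_ext[OF M x])
  have s1: "(\<Sum>m\<in>UNIV. \<Sum>l\<in>UNIV. ?G m m l * ?U $ l $ n) = (\<Sum>l\<in>UNIV. Tl M a (x$1) (x$2) l * ?U $ l $ n)"
  proof -
    have "(\<Sum>m\<in>UNIV. \<Sum>l\<in>UNIV. ?G m m l * ?U $ l $ n) = (\<Sum>l\<in>UNIV. \<Sum>m\<in>UNIV. ?G m m l * ?U $ l $ n)"
      by (rule sum.swap)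
    also have "\<dots> = (\<Sum>l\<in>UNIV. (\<Sum>m\<in>UNIV. ?G m m l) * ?U $ l $ n)"
      by (simp add: sum_distrib_right)
    also have "\<dots> = (\<Sum>l\<in>UNIV. Tl M a (x$1) (x$2) l * ?U $ l $ n)"
      using ef by (simp add: trace_christoffel)
    finally show ?thesis .
  qed
  have s2: "(\<Sum>m\<in>UNIV. \<Sum>l\<in>UNIV. ?G n m l * ?U $ m $ l) = 0"
    by (rule sym_anti_sum) (rule christoffel_sym, rule FU_anti)
  have "current M a ?F x $ n = - (\<Sum>m\<in>UNIV. pd (\<lambda>y. Fup M a ?F y $ m $ n) m x
       + (\<Sum>l\<in>UNIV. ?G m m l * ?U $ l $ n + ?G n m l * ?U $ m $ l))"
    unfolding current_def FX by simp
  also have "\<dots> = - ((\<Sum>m\<in>UNIV. pd (\<lambda>y. Fup M a ?F y $ m $ n) m x)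
       + (\<Sum>m\<in>UNIV. \<Sum>l\<in>UNIV. ?G m m l * ?U $ l $ n) + (\<Sum>m\<in>UNIV. \<Sum>l\<in>UNIV. ?G n m l * ?U $ m $ l))"
    by (simp add: sum.distrib)
  finally show ?thesis using s1 s2 by simp
qed
lemma fu11: "(\<lambda>r. FU a C f u0 r t $ 1 $ 1) = (\<lambda>r. 0)" by (simp add: FU_def)
lemma fu21: "(\<lambda>t. FU a C f u0 r t $ 2 $ 1) = (\<lambda>t. - (u0 / rho2 a r t * bup a C f r t 2))" by (simp add: FU_def)
lemma fu1n: "n \<noteq> 1 \<Longrightarrow> (\<lambda>r. FU a C f u0 r t $ 1 $ n) = (\<lambda>r. u0 / rho2 a r t * bup a C f r t n)"
  by (simp add: FU_def)
lemma fu2n: "n \<noteq> 1 \<Longrightarrow> (\<lambda>t. FU a C f u0 r t $ 2 $ n) = (\<lambda>t. 0)" by (simp add: FU_def)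

lemma current_val:
  assumes M: "M > 0" "\<bar>a\<bar> \<le> M" and x: "x \<in> exterior M a"
    and fd: "(f has_real_derivative f') (at (x$1))" and Q: "C^2 - (f (x$1))^2 > 0"
  shows "current M a (F_M M a C f u0) x $ n =
    (if n = 1 then 0 else - (u0 * bd a C f f' (x$1) (x$2) n / rho2 a (x$1) (x$2)))"
proof -
  note ef = exterior_facts[OF M x]
  define r where "r = x$1"
  define t where "t = x$2"
  have R: "rho2 a r t \<noteq> 0" and S: "sin t \<noteq> 0" using ef by (auto simp: r_def t_def)
  have fd': "(f has_real_derivative f') (at r)" and Q': "C^2 - (f r)^2 > 0" using fd Q by (auto simp: r_def)
  have e: "current M a (F_M M a C f u0) x $ n =
    - ((\<Sum>m\<in>UNIV. (if m = 1 then deriv (\<lambda>r. FU a C f u0 r t $ m $ n) r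
     else if m = 2 then deriv (\<lambda>t. FU a C f u0 r t $ m $ n) t else 0))
       + (\<Sum>l\<in>UNIV. Tl M a r t l * FU a C f u0 r t $ l $ n))"
    unfolding current_eq[OF M x] pdFup[OF M x] r_def t_def by simp
  show ?thesis
  proof (cases "n = 1")
    case True
    have d: "deriv (\<lambda>t. FU a C f u0 r t $ 2 $ 1) t =
      u0 * sqrt (C^2 - (f r)^2) * (rhot a t * sin t + rho2 a r t * cos t) / (rho2 a r t * sin t)^2"
      unfolding fu21 by (rule DERIV_imp_deriv[OF dU2_t[OF R S]])
    have u: "FU a C f u0 r t $ 2 $ 1 = - (u0 / rho2 a r t * bup a C f r t 2)" "FU a C f u0 r t $ 1 $ 1 = 0"
      by (simp_all add: FU_def)
    have "current M a (F_M M a C f u0) x $ n = 0"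
      unfolding e using True R S
      by (simp add: sum4 fu11 d deriv_const0 Tl_def u bup_def field_simps power2_eq_square)
    then show ?thesis using True by simp
  next
    case False
    have d: "deriv (\<lambda>r. FU a C f u0 r t $ 1 $ n) r =
      u0 * bd a C f f' r t n / rho2 a r t - u0 * bup a C f r t n * (2*r) / (rho2 a r t)^2"
      unfolding fu1n[OF False] by (rule DERIV_imp_deriv[OF dU_r[OF R S Q' fd']])
    have u: "FU a C f u0 r t $ 1 $ n = u0 / rho2 a r t * bup a C f r t n"
      "FU a C f u0 r t $ 2 $ n = 0" "FU a C f u0 r t $ 0 $ n = 0" "FU a C f u0 r t $ 3 $ n = 0"
      using False by (simp_all add: FU_def)
    show ?thesis unfolding e using False R
      by (simp add: sum4 d fu2n[OF False] deriv_const0 Tl_def u r_def[symmetric] t_def[symmetric] field_simps power2_eq_square)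
  qed
qed


definition blow :: "real \<Rightarrow> real \<Rightarrow> (real \<Rightarrow> real) \<Rightarrow> real \<Rightarrow> real \<Rightarrow> 4 \<Rightarrow> real" where
  "blow a C f r t n = (if n = 0 then f r * a else if n = 2 then rho2 a r t * sqrt (C^2 - (f r)^2) / sin t
     else if n = 3 then - (f r * (r^2 + a^2)) else 0)"

lemma FM_val: "F_M M a C f u0 x $ m $ n =
   (if m = 1 then u0 / Delta M a (x$1) * blow a C f (x$1) (x$2) n else 0)
 - (if n = 1 then u0 / Delta M a (x$1) * blow a C f (x$1) (x$2) m else 0)"
  by (cases m rule: cases4; cases n rule: cases4) (simp_all add: F_M_def wedge1_def axis_def blow_def Let_def)

lemma blow_bd:
  assumes R: "rho2 a r t \<noteq> 0" and S: "sin t \<noteq> 0" and Q: "C^2 - (f r)^2 > 0"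
  shows "blow a C f r t 0 * bd a C f f' r t 0 + blow a C f r t 2 * bd a C f f' r t 2 + blow a C f r t 3 * bd a C f f' r t 3 = 0"
proof -
  have q: "sqrt (C^2 - (f r)^2) \<noteq> 0" using Q by simp
  have sc2: "(sin t)^2 + (cos t)^2 = 1" by simp
  show ?thesis using R S q
    apply (simp add: blow_def bd_def)
    apply (simp add: field_simps)
    apply (unfold rho2_def)
    using sc2 apply algebra
    done
qed

lemma blow_bup:
  assumes R: "rho2 a r t \<noteq> 0" and S: "sin t \<noteq> 0" and Q: "C^2 - (f r)^2 > 0"
  shows "blow a C f r t 0 * bup a C f r t 0 + blow a C f r t 2 * bup a C f r t 2 + blow a C f r t 3 * bup a C f r t 3
    = rho2 a r t * C^2 / (sin t)^2"
proof -
  have q: "(sqrt (C^2 - (f r)^2))^2 = C^2 - (f r)^2" using Q by simp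
  have sc2: "(sin t)^2 + (cos t)^2 = 1" by simp
  show ?thesis using R S
    apply (simp add: blow_def bup_def)
    apply (simp add: field_simps q abs_of_pos[OF Q])
    apply (unfold rho2_def)
    using sc2 q apply algebra
    done
qed
lemma force_free_pt:
  assumes M: "M > 0" "\<bar>a\<bar> \<le> M" and x: "x \<in> exterior M a"
    and fd: "(f has_real_derivative f') (at (x$1))" and Q: "C^2 - (f (x$1))^2 > 0"
  shows "form_apply (F_M M a C f u0 x) (current M a (F_M M a C f u0) x) w = 0"
proof -
  note ef = exterior_facts[OF M x]
  note J = current_val[OF M x fd Q]
  let ?r = "x$1" and ?t = "x$2"
  have "form_apply (F_M M a C f u0 x) (current M a (F_M M a C f u0) x) w =
     u0 / Delta M a ?r * (u0 / rho2 a ?r ?t) * w$1 *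
     (blow a C f ?r ?t 0 * bd a C f f' ?r ?t 0 + blow a C f ?r ?t 2 * bd a C f f' ?r ?t 2 + blow a C f ?r ?t 3 * bd a C f f' ?r ?t 3)"
    by (simp add: form_apply_def sum4 FM_val J algebra_simps)
  also have "\<dots> = 0" using ef Q by (simp add: blow_bd)
  finally show ?thesis .
qed

lemma magnetic_pt:
  assumes M: "M > 0" "\<bar>a\<bar> \<le> M" and x: "x \<in> exterior M a"
    and Q: "C^2 - (f (x$1))^2 > 0" and C: "C \<noteq> 0" and u: "u0 \<noteq> 0"
  shows "(\<Sum>m\<in>UNIV. \<Sum>n\<in>UNIV. F_M M a C f u0 x $ m $ n * Fup M a (F_M M a C f u0) x $ m $ n) > 0"
proof -
  note ef = exterior_facts[OF M x]
  let ?r = "x$1" and ?t = "x$2"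
  have "(\<Sum>m\<in>UNIV. \<Sum>n\<in>UNIV. F_M M a C f u0 x $ m $ n * Fup M a (F_M M a C f u0) x $ m $ n) =
     2 * (u0 / Delta M a ?r) * (u0 / rho2 a ?r ?t) *
     (blow a C f ?r ?t 0 * bup a C f ?r ?t 0 + blow a C f ?r ?t 2 * bup a C f ?r ?t 2 + blow a C f ?r ?t 3 * bup a C f ?r ?t 3)"
    by (simp add: Fup_ext[OF M x] sum4 FM_val FU_def algebra_simps)
  also have "\<dots> = 2 * (u0 / Delta M a ?r) * (u0 / rho2 a ?r ?t) * (rho2 a ?r ?t * C^2 / (sin ?t)^2)"
    using ef Q by (simp add: blow_bup)
  also have "\<dots> = 2 * u0^2 * C^2 / (Delta M a ?r * (sin ?t)^2)"
    using ef by (simp add: field_simps power2_eq_square)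
  also have "\<dots> > 0"
  proof -
    have "u0^2 > 0" "C^2 > 0" "(sin ?t)^2 > 0" using C u ef by simp_all
    then show ?thesis using ef by (intro divide_pos_pos mult_pos_pos) simp_all
  qed
  finally show ?thesis .
qed

lemma vacuum_pt:
  assumes M: "M > 0" "\<bar>a\<bar> \<le> M" and x: "x \<in> exterior M a"
    and fd: "(f has_real_derivative 0) (at (x$1))" and Q: "C^2 - (f (x$1))^2 > 0"
  shows "current M a (F_M M a C f u0) x = 0"
  using current_val[OF M x fd Q] by (simp add: vec_eq_iff bd_def)


lemma gdiff_r:
  assumes D: "Delta M a r \<noteq> 0" and Q: "C^2 - (f r)^2 > 0"
    and fd: "(f has_real_derivative f') (at r)"
  shows "\<exists>E. ((\<lambda>r. u0 / Delta M a r * blow a C f r t k) has_real_derivative E) (at r)"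
proof -
  have p: "((\<lambda>r. (f r)^2) has_real_derivative of_nat 2 * (f' * f r ^ (2 - Suc 0))) (at r)"
    by (rule DERIV_power[OF fd])
  have p2: "((\<lambda>r. C^2 - (f r)^2) has_real_derivative 0 - of_nat 2 * (f' * f r ^ (2 - Suc 0))) (at r)"
    by (rule DERIV_diff[OF DERIV_const p])
  have sq: "((\<lambda>r. sqrt (C^2 - (f r)^2)) has_real_derivative
      inverse (sqrt (C^2 - (f r)^2)) / 2 * (0 - of_nat 2 * (f' * f r ^ (2 - Suc 0)))) (at r)"
    by (rule DERIV_chain2[OF DERIV_real_sqrt[OF Q] p2])
  have "((\<lambda>r. u0 / Delta M a r) has_real_derivative (0 * Delta M a r - u0 * (2*r - 2*M)) / (Delta M a r * Delta M a r)) (at r)"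
    using D by (intro DERIV_divide[OF DERIV_const dDr]) simp
  then have c: "\<exists>E. ((\<lambda>r. u0 / Delta M a r) has_real_derivative E) (at r)" by blast
  have b: "\<exists>E. ((\<lambda>r. blow a C f r t k) has_real_derivative E) (at r)"
  proof (cases k rule: cases4)
    case 1 then show ?thesis unfolding blow_def by (auto intro: DERIV_cmult_right fd)
  next
    case 2 then show ?thesis unfolding blow_def by (auto intro: DERIV_const)
  next
    case 3
    have "((\<lambda>r. rho2 a r t * sqrt (C^2 - (f r)^2) / sin t) has_real_derivative
       (2*r * sqrt (C^2 - (f r)^2) + inverse (sqrt (C^2 - (f r)^2)) / 2 * (0 - of_nat 2 * (f' * f r ^ (2 - Suc 0))) * rho2 a r t) / sin t) (at r)"
      by (intro DERIV_cdivide DERIV_mult[OF d22r sq])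
    then show ?thesis using 3 unfolding blow_def by auto
  next
    case 4
    have r2: "((\<lambda>r. r^2 + a^2) has_real_derivative of_nat 2 * (1 * r ^ (2 - Suc 0)) + 0) (at r)"
      by (intro DERIV_add DERIV_power DERIV_ident DERIV_const)
    have "((\<lambda>r. - (f r * (r^2 + a^2))) has_real_derivative
       - (f' * (r^2+a^2) + (of_nat 2 * (1 * r ^ (2 - Suc 0)) + 0) * f r)) (at r)"
      by (intro DERIV_minus DERIV_mult[OF fd r2])
    then show ?thesis using 4 unfolding blow_def by auto
  qed
  from c b obtain E1 E2 where "((\<lambda>r. u0 / Delta M a r) has_real_derivative E1) (at r)"
    "((\<lambda>r. blow a C f r t k) has_real_derivative E2) (at r)" by blast
  from DERIV_mult[OF this] show ?thesis by blast
qed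

lemma gdiff_t:
  assumes S: "sin t \<noteq> 0"
  shows "\<exists>E. ((\<lambda>t. u0 / Delta M a r * blow a C f r t k) has_real_derivative E) (at t)"
proof -
  have b: "\<exists>E. ((\<lambda>t. blow a C f r t k) has_real_derivative E) (at t)"
  proof (cases "k = 2")
    case True
    have "((\<lambda>t. rho2 a r t * sqrt (C^2 - (f r)^2) / sin t) has_real_derivative
      ((rhot a t * sqrt (C^2 - (f r)^2) + 0 * rho2 a r t) * sin t - rho2 a r t * sqrt (C^2 - (f r)^2) * cos t) / (sin t * sin t)) (at t)"
      using S by (intro DERIV_divide DERIV_mult[OF d22t DERIV_const] DERIV_sin)
    then show ?thesis using True unfolding blow_def by auto
  next
    case False then show ?thesis by (cases "k = 0") (auto simp: blow_def intro!: exI[of _ 0])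
  qed
  then obtain E where "((\<lambda>t. blow a C f r t k) has_real_derivative E) (at t)" by blast
  from DERIV_cmult[OF this, of "u0 / Delta M a r"] show ?thesis by blast
qed


definition gg :: "real \<Rightarrow> real \<Rightarrow> real \<Rightarrow> (real \<Rightarrow> real) \<Rightarrow> real \<Rightarrow> 4 \<Rightarrow> real \<Rightarrow> real \<Rightarrow> real" where "gg M a C f u0 k r t = u0 / Delta M a r * blow a C f r t k"

lemma Dt_zero: "k \<noteq> 2 \<Longrightarrow> deriv (\<lambda>t. gg M a C f u0 k r t) t = 0"
  by (cases k rule: cases4) (simp_all add: gg_def blow_def deriv_const0)

lemma deriv_cases:
  fixes g :: "4 \<Rightarrow> real \<Rightarrow> real"
  assumes "\<And>k. \<exists>E. (g k has_real_derivative E) (at z)"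
  shows "deriv (\<lambda>z. (if m = 1 then g n z else 0) - (if n = 1 then g m z else 0)) z =
    (if m = 1 \<and> n \<noteq> 1 then deriv (g n) z else if n = 1 \<and> m \<noteq> 1 then - deriv (g m) z else 0)"
proof -
  obtain E where E: "(g m has_real_derivative E) (at z)" using assms by blast
  show ?thesis
    using DERIV_imp_deriv[OF DERIV_minus[OF E]] DERIV_imp_deriv[OF E]
    by (cases "m = 1"; cases "n = 1") (simp_all add: deriv_const0)
qed

lemma pdF:
  assumes M: "M > 0" "\<bar>a\<bar> \<le> M" and x: "x \<in> exterior M a"
    and fd: "(f has_real_derivative f') (at (x$1))" and Q: "C^2 - (f (x$1))^2 > 0"
  shows "pd (\<lambda>y. F_M M a C f u0 y $ m $ n) l x =
    (if l = 1 then (if m = 1 \<and> n \<noteq> 1 then deriv (\<lambda>r. gg M a C f u0 n r (x$2)) (x$1)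
                    else if n = 1 \<and> m \<noteq> 1 then - deriv (\<lambda>r. gg M a C f u0 m r (x$2)) (x$1) else 0)
     else if l = 2 then (if m = 1 \<and> n \<noteq> 1 then deriv (\<lambda>t. gg M a C f u0 n (x$1) t) (x$2)
                    else if n = 1 \<and> m \<noteq> 1 then - deriv (\<lambda>t. gg M a C f u0 m (x$1) t) (x$2) else 0)
     else 0)"
proof -
  note ef = exterior_facts[OF M x]
  have dr: "\<And>k. \<exists>E. ((\<lambda>r. gg M a C f u0 k r (x$2)) has_real_derivative E) (at (x$1))"
    unfolding gg_def using ef by (intro gdiff_r[OF _ Q fd]) simp
  have dt: "\<And>k. \<exists>E. ((\<lambda>t. gg M a C f u0 k (x$1) t) has_real_derivative E) (at (x$2))"
    unfolding gg_def using ef by (intro gdiff_t) simp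
  define H where "H = (\<lambda>r t. (if m = 1 then gg M a C f u0 n r t else 0) - (if n = 1 then gg M a C f u0 m r t else 0))"
  have e: "(\<lambda>y. F_M M a C f u0 y $ m $ n) = (\<lambda>y. H (y$1) (y$2))"
    unfolding H_def gg_def by (simp add: FM_val)
  have h1: "deriv (\<lambda>r. H r (x$2)) (x$1) = (if m = 1 \<and> n \<noteq> 1 then deriv (\<lambda>r. gg M a C f u0 n r (x$2)) (x$1)
                    else if n = 1 \<and> m \<noteq> 1 then - deriv (\<lambda>r. gg M a C f u0 m r (x$2)) (x$1) else 0)"
    unfolding H_def using deriv_cases[of "\<lambda>k r. gg M a C f u0 k r (x$2)" "x$1" m n, OF dr] by simp
  have h2: "deriv (\<lambda>t. H (x$1) t) (x$2) = (if m = 1 \<and> n \<noteq> 1 then deriv (\<lambda>t. gg M a C f u0 n (x$1) t) (x$2)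
                    else if n = 1 \<and> m \<noteq> 1 then - deriv (\<lambda>t. gg M a C f u0 m (x$1) t) (x$2) else 0)"
    unfolding H_def using deriv_cases[of "\<lambda>k t. gg M a C f u0 k (x$1) t" "x$2" m n, OF dt] by simp
  show ?thesis unfolding e pd_coord[of H l x] h1 h2 by simp
qed

lemma closed_pt:
  assumes M: "M > 0" "\<bar>a\<bar> \<le> M" and x: "x \<in> exterior M a"
    and fd: "(f has_real_derivative f') (at (x$1))" and Q: "C^2 - (f (x$1))^2 > 0"
  shows "pd (\<lambda>y. F_M M a C f u0 y $ m $ n) l x + pd (\<lambda>y. F_M M a C f u0 y $ n $ l) m x
    + pd (\<lambda>y. F_M M a C f u0 y $ l $ m) n x = 0"
  unfolding pdF[OF M x fd Q]
  by (cases l rule: cases4; cases m rule: cases4; cases n rule: cases4) (simp_all add: Dt_zero)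


lemma blow1: "blow a C f r t 1 = 0" by (simp add: blow_def)

lemma row_sum:
  "(\<Sum>m\<in>UNIV. F_M M a C f u0 x $ m $ n * v $ m) =
   u0 / Delta M a (x$1) * (blow a C f (x$1) (x$2) n * v$1
     - (if n = 1 then blow a C f (x$1) (x$2) 0 * v$0 + blow a C f (x$1) (x$2) 2 * v$2 + blow a C f (x$1) (x$2) 3 * v$3 else 0))"
  by (cases n rule: cases4) (simp_all add: sum4 FM_val blow1 algebra_simps)

lemma kernel_char:
  assumes D: "Delta M a (x$1) \<noteq> 0" and u: "u0 \<noteq> 0" and b2: "blow a C f (x$1) (x$2) 2 \<noteq> 0"
  shows "v \<in> form_kernel (F_M M a C f u0 x) \<longleftrightarrow>
    v$1 = 0 \<and> blow a C f (x$1) (x$2) 0 * v$0 + blow a C f (x$1) (x$2) 2 * v$2 + blow a C f (x$1) (x$2) 3 * v$3 = 0"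
proof -
  let ?B = "F_M M a C f u0 x"
  have fa: "form_apply ?B v w = (\<Sum>n\<in>UNIV. (\<Sum>m\<in>UNIV. ?B $ m $ n * v $ m) * w $ n)" for w
    unfolding form_apply_def by (subst sum.swap) (simp add: sum_distrib_left sum_distrib_right mult_ac)
  have bl1: "blow a C f (x$1) (x$2) 1 = 0" by (simp add: blow_def)
  show ?thesis
  proof
    assume "v \<in> form_kernel ?B"
    then have k: "\<And>w. form_apply ?B v w = 0" by (simp add: form_kernel_def)
    have "(\<Sum>m\<in>UNIV. ?B $ m $ n * v $ m) = 0" for n
      using k[of "axis n 1"] unfolding fa by (simp add: axis_def if_distrib sum.delta cong: if_cong)
    from this[of 2] this[of 1] show "v$1 = 0 \<and> blow a C f (x$1) (x$2) 0 * v$0 + blow a C f (x$1) (x$2) 2 * v$2 + blow a C f (x$1) (x$2) 3 * v$3 = 0"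
      using D u b2 bl1 by (simp add: row_sum)
  next
    assume h: "v$1 = 0 \<and> blow a C f (x$1) (x$2) 0 * v$0 + blow a C f (x$1) (x$2) 2 * v$2 + blow a C f (x$1) (x$2) 3 * v$3 = 0"
    have "(\<Sum>m\<in>UNIV. ?B $ m $ n * v $ m) = 0" for n using h by (simp add: row_sum)
    then show "v \<in> form_kernel ?B" unfolding form_kernel_def by (simp add: fa)
  qed
qed
lemma kernel_pt:
  assumes M: "M > 0" "\<bar>a\<bar> \<le> M" and x: "x \<in> exterior M a"
    and Q: "C^2 - (f (x$1))^2 > 0" and u: "u0 \<noteq> 0"
  shows "form_kernel (F_M M a C f u0 x) = span {e0 M a x, e1 a C f x}"
proof -
  note ef = exterior_facts[OF M x]
  define r where "r = x$1"
  define t where "t = x$2"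
  define q where "q = sqrt (C^2 - (f r)^2)"
  define L where "L = f r / q"
  have r0: "r > 0" and D: "Delta M a r > 0" and S: "sin t > 0" and R: "rho2 a r t > 0"
    using ef by (simp_all add: r_def t_def)
  have q0: "q > 0" using Q by (simp add: q_def r_def)
  have sc2: "(sin t)^2 + (cos t)^2 = 1" by simp
  have sq1: "sqrt (rho2 a r t * Delta M a r) > 0" using D R by simp
  have sq2: "sqrt (rho2 a r t * (1 + L^2)) > 0" using R by (simp add: add_pos_nonneg)
  have b2: "blow a C f r t 2 \<noteq> 0" using R S q0 by (simp add: blow_def q_def[symmetric])
  let ?K = "{v :: real^4. v$1 = 0 \<and> blow a C f r t 0 * v$0 + blow a C f r t 2 * v$2 + blow a C f r t 3 * v$3 = 0}"
  have kerK: "form_kernel (F_M M a C f u0 x) = ?K"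
    using kernel_char[of M a x u0 C f] D u b2 by (auto simp: r_def t_def)
  have subK: "subspace ?K"
    unfolding subspace_def by (auto simp: algebra_simps) (metis distrib_left mult_zero_right)
  have e0K: "e0 M a x \<in> ?K"
    by (simp add: e0_def Let_def axis_def blow_def r_def[symmetric] t_def[symmetric] algebra_simps)
  have e1K: "e1 a C f x \<in> ?K"
  proof -
    have "blow a C f r t 0 * (a * (sin t)^2) + blow a C f r t 2 * (L * sin t) + blow a C f r t 3 = 0"
      using q0 S
      apply (simp add: blow_def L_def q_def[symmetric])
      apply (simp add: field_simps)
      apply (unfold rho2_def)
      using sc2 apply algebra
      done
    then have h2: "(1 / (sqrt (rho2 a r t * (1 + L^2)) * sin t)) *
       (blow a C f r t 0 * (a * (sin t)^2) + blow a C f r t 2 * (L * sin t) + blow a C f r t 3) = 0" by simp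
    define k1 where "k1 = 1 / (sqrt (rho2 a r t * (1 + L^2)) * sin t)"
    have comps: "e1 a C f x $ 0 = k1 * (a * (sin t)^2)" "e1 a C f x $ 1 = 0"
      "e1 a C f x $ 2 = k1 * (L * sin t)" "e1 a C f x $ 3 = k1"
      by (simp_all add: e1_def Let_def axis_def r_def[symmetric] t_def[symmetric] k1_def L_def q_def)
    show ?thesis using h2 unfolding k1_def[symmetric] by (simp add: comps algebra_simps)
  qed
  have "span {e0 M a x, e1 a C f x} \<subseteq> ?K"
    using e0K e1K subK by (intro span_minimal) auto
  moreover have "?K \<subseteq> span {e0 M a x, e1 a C f x}"
  proof
    fix v :: "real^4" assume v: "v \<in> ?K"
    have v1: "v$1 = 0" using v by simp
    have v2: "v$2 = - (blow a C f r t 0 * v$0 + blow a C f r t 3 * v$3) / blow a C f r t 2"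
      using v b2 by (simp add: field_simps)
    define k0 where "k0 = 1 / sqrt (rho2 a r t * Delta M a r)"
    define k1 where "k1 = 1 / (sqrt (rho2 a r t * (1 + L^2)) * sin t)"
    have lp: "1 + L^2 > 0" by (simp add: add_pos_nonneg)
    have k0: "k0 \<noteq> 0" and k1: "k1 \<noteq> 0" using R D S lp by (simp_all add: k0_def k1_def)
    have comps0: "e0 M a x $ 0 = k0 * (r^2 + a^2)" "e0 M a x $ 1 = 0" "e0 M a x $ 2 = 0" "e0 M a x $ 3 = k0 * a"
      by (simp_all add: e0_def Let_def axis_def r_def[symmetric] t_def[symmetric] k0_def)
    have comps1: "e1 a C f x $ 0 = k1 * (a * (sin t)^2)" "e1 a C f x $ 1 = 0"
      "e1 a C f x $ 2 = k1 * (L * sin t)" "e1 a C f x $ 3 = k1"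
      by (simp_all add: e1_def Let_def axis_def r_def[symmetric] t_def[symmetric] k1_def L_def q_def)
    define \<alpha> where "\<alpha> = (v$0 - a * (sin t)^2 * v$3) / (k0 * rho2 a r t)"
    define \<gamma> where "\<gamma> = ((r^2 + a^2) * v$3 - a * v$0) / (k1 * rho2 a r t)"
    have "v = \<alpha> *\<^sub>R e0 M a x + \<gamma> *\<^sub>R e1 a C f x"
    proof -
      have c0: "v$0 = \<alpha> * (k0 * (r^2 + a^2)) + \<gamma> * (k1 * (a * (sin t)^2))"
        unfolding \<alpha>_def \<gamma>_def using k0 k1 R
        apply (simp add: field_simps)
        apply (unfold rho2_def)
        using sc2 apply algebra
        done
      have c3: "v$3 = \<alpha> * (k0 * a) + \<gamma> * k1"
        unfolding \<alpha>_def \<gamma>_def using k0 k1 R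
        apply (simp add: field_simps)
        apply (unfold rho2_def)
        using sc2 apply algebra
        done
      have c2: "v$2 = \<gamma> * (k1 * (L * sin t))"
        unfolding v2 \<gamma>_def L_def using k1 S R q0
        by (simp add: blow_def q_def[symmetric] field_simps)
      show ?thesis
        using c0 c2 c3 v1 by (simp add: vec_eq_iff all4 comps0 comps1)
    qed
    then show "v \<in> span {e0 M a x, e1 a C f x}"
      by (metis span_add span_scale span_base insertI1 insertI2 singletonI)
  qed
  ultimately show ?thesis using kerK by blast
qed


theorem mainTheorem12:
  fixes M a C u0 :: real and f :: "real \<Rightarrow> real"
  assumes "M > 0" and "\<bar>a\<bar> \<le> M"
    and "C \<noteq> 0" and "u0 \<noteq> 0"
    and "smooth_real_on {M + sqrt (M\<^sup>2 - a\<^sup>2)<..} f"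
    and "\<forall>r > M + sqrt (M\<^sup>2 - a\<^sup>2). (f r)\<^sup>2 < C\<^sup>2"
  shows "closed_form (F_M M a C f u0) (exterior M a)
    \<and> force_free M a (F_M M a C f u0) (exterior M a)
    \<and> magnetically_dominated M a (F_M M a C f u0) (exterior M a)
    \<and> (\<forall>x\<in>exterior M a. form_kernel (F_M M a C f u0 x) = span {e0 M a x, e1 a C f x})
    \<and> ((\<exists>c. \<forall>r > M + sqrt (M\<^sup>2 - a\<^sup>2). f r = c) \<longrightarrow> vacuum M a (F_M M a C f u0) (exterior M a))"
proof -
  note M = assms(1,2)
  have xr: "x$1 > M + sqrt (M\<^sup>2 - a\<^sup>2)" if "x \<in> exterior M a" for x
    using that by (simp add: exterior_def)
  have fd: "(f has_real_derivative deriv f (x$1)) (at (x$1))" if "x \<in> exterior M a" for x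
  proof -
    have "((deriv ^^ 0) f) differentiable (at (x$1))"
      using assms(5) xr[OF that] unfolding smooth_real_on_def by blast
    then show ?thesis by (simp add: DERIV_deriv_iff_real_differentiable)
  qed
  have Q: "C^2 - (f (x$1))^2 > 0" if "x \<in> exterior M a" for x
    using assms(6) xr[OF that] by simp
  have P1: "closed_form (F_M M a C f u0) (exterior M a)"
    unfolding closed_form_def by (intro ballI allI closed_pt[where f=f and C=C, OF M _ fd Q])
  have P2: "force_free M a (F_M M a C f u0) (exterior M a)"
    unfolding force_free_def by (intro ballI allI force_free_pt[where f=f and C=C, OF M _ fd Q])
  have P3: "magnetically_dominated M a (F_M M a C f u0) (exterior M a)"
    unfolding magnetically_dominated_def
  proof (intro ballI)
    fix x assume x: "x \<in> exterior M a"
    show "(\<Sum>m\<in>UNIV. \<Sum>n\<in>UNIV. F_M M a C f u0 x $ m $ n * Fup M a (F_M M a C f u0) x $ m $ n) > 0"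
      by (rule magnetic_pt[where f=f and C=C, OF M x Q[OF x] assms(3,4)])
  qed
  have P4: "\<forall>x\<in>exterior M a. form_kernel (F_M M a C f u0 x) = span {e0 M a x, e1 a C f x}"
  proof (intro ballI)
    fix x assume x: "x \<in> exterior M a"
    show "form_kernel (F_M M a C f u0 x) = span {e0 M a x, e1 a C f x}"
      by (rule kernel_pt[where f=f and C=C, OF M x Q[OF x] assms(4)])
  qed
  have P5: "vacuum M a (F_M M a C f u0) (exterior M a)" if c: "\<exists>c. \<forall>r > M + sqrt (M\<^sup>2 - a\<^sup>2). f r = c"
  proof -
    obtain c where c: "\<forall>r > M + sqrt (M\<^sup>2 - a\<^sup>2). f r = c" using c by blast
    have f0: "(f has_real_derivative 0) (at (x$1))" if x: "x \<in> exterior M a" for x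
    proof -
      have ev: "eventually (\<lambda>y. y \<in> {M + sqrt (M\<^sup>2 - a\<^sup>2)<..}) (nhds (x$1))"
        using xr[OF x] by (intro eventually_nhds_in_open) auto
      have "eventually (\<lambda>y. f y = c) (nhds (x$1))"
        using ev by eventually_elim (use c in auto)
      then have "(f has_real_derivative 0) (at (x$1)) \<longleftrightarrow> ((\<lambda>y. c) has_real_derivative 0) (at (x$1))"
        by (rule DERIV_cong_ev[OF refl _ refl])
      then show ?thesis by simp
    qed
    show ?thesis unfolding vacuum_def
    proof (intro ballI)
      fix x assume x: "x \<in> exterior M a"
      show "current M a (F_M M a C f u0) x = 0" by (rule vacuum_pt[where f=f and C=C, OF M x f0[OF x] Q[OF x]])
    qed
  qed
  show ?thesis using P1 P2 P3 P4 P5 by blast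
qed

end
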